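(* Let $\psi(\theta;y,x)$ be an $\mathbb R^q$-valued function on $\Theta\times\mathcal Y\times\mathcal X$, $\Theta\subseteq\mathbb R^q$, and let $\theta(\cdot)$ be the estimating-equation (EE) functional defined by: $\theta(P)$ is the unique solution $\theta\in\Theta$ of $E_P[\psi(\theta;Y,X)]=0$ (assumed to exist uniquely for all joint distributions on which it is evaluated). Fix a Markov kernel $P_{Y|X}$. Then $\theta(\cdot)$ is well-specified for $P_{Y|X}$ if and only if there exists $\theta_0\in\Theta$ such that $E[\psi(\theta_0;Y,X)\mid X=x]=\int\psi(\theta_0;y,x)P_{Y|X=x}(dy)=0$ for all $x\in\mathcal X$.
   Context: A joint distribution $P$ of $(Y,X)$ on $\mathcal Y\times\mathcal X$ is written $P=P_{Y|X}\otimes P_X$, meaning $P(dy,dx)=P_{Y|X=x}(dy)P_X(dx)$, with $P_X$ the marginal of $X$ and $P_{Y|X}$ a Markov kernel defined for every $x$. There is a designated set of "acceptable" regressor distributions; $P_{Y|X}\otimes P_X$ is in the domain of $\theta$ for every acceptable $P_X$, and the set is closed under mixing: if $P_X$ is acceptable and $P_X'$ is any distribution (e.g. a point mass $\delta_x$), then $(1-t)P_X+tP_X'$ is acceptable for $0\le t<1$. The functional is well-specified for $P_{Y|X}$ if $\theta(P_{Y|X}\otimes P_X)=\theta(P_{Y|X}\otimes P_X')$ for all acceptable $P_X,P_X'$. All expectations are assumed to exist. *)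

theory Defs
  imports "HOL-Probability.Probability"
begin

definition joint :: "'y measure \<Rightarrow> 'x measure \<Rightarrow> ('x \<Rightarrow> 'y measure) \<Rightarrow> 'x measure \<Rightarrow> ('y \<times> 'x) measure" where
  "joint MY MX K PX = PX \<bind> (\<lambda>x. K x \<bind> (\<lambda>y. return (MY \<Otimes>\<^sub>M MX) (y, x)))"

definition mix_measure :: "'x measure \<Rightarrow> real \<Rightarrow> 'x measure \<Rightarrow> 'x measure \<Rightarrow> 'x measure" where
  "mix_measure MX t P P' = measure_of (space MX) (sets MX)
     (\<lambda>A. ennreal (1 - t) * emeasure P A + ennreal t * emeasure P' A)"

definition ee_theta :: "'a::euclidean_space set \<Rightarrow> ('a \<Rightarrow> 'y \<Rightarrow> 'x \<Rightarrow> 'a) \<Rightarrow> ('y \<times> 'x) measure \<Rightarrow> 'a" where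
  "ee_theta \<Theta> \<psi> P = (THE \<theta>. \<theta> \<in> \<Theta> \<and> (\<integral>z. (case z of (y, x) \<Rightarrow> \<psi> \<theta> y x) \<partial>P) = 0)"

definition well_specified :: "(('y \<times> 'x) measure \<Rightarrow> 'b) \<Rightarrow> 'y measure \<Rightarrow> 'x measure \<Rightarrow> 'x measure set \<Rightarrow> ('x \<Rightarrow> 'y measure) \<Rightarrow> bool" where
  "well_specified \<theta>f MY MX Acc K \<longleftrightarrow>
     (\<forall>PX\<in>Acc. \<forall>PX'\<in>Acc. \<theta>f (joint MY MX K PX) = \<theta>f (joint MY MX K PX'))"

end

theory Submission imports Defs begin

lemma emeasure_mix:
  assumes P: "sets P = sets MX" and P': "sets P' = sets MX" and t: "0 \<le> t" "t \<le> 1"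
    and A: "A \<in> sets MX"
  shows "emeasure (mix_measure MX t P P') A = ennreal (1 - t) * emeasure P A + ennreal t * emeasure P' A"
  unfolding mix_measure_def
proof (rule emeasure_measure_of_sigma[OF sets.sigma_algebra_axioms _ _ A])
  show "positive (sets MX) (\<lambda>A. ennreal (1 - t) * emeasure P A + ennreal t * emeasure P' A)"
    by (simp add: positive_def)
  show "countably_additive (sets MX) (\<lambda>A. ennreal (1 - t) * emeasure P A + ennreal t * emeasure P' A)"
    unfolding countably_additive_def
  proof (intro allI impI)
    fix B :: "nat \<Rightarrow> _" assume B: "range B \<subseteq> sets MX" "disjoint_family B" "\<Union> (range B) \<in> sets MX"
    have 1: "(\<Sum>i. emeasure P (B i)) = emeasure P (\<Union> (range B))"
      using B P by (intro suminf_emeasure) auto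
    have 2: "(\<Sum>i. emeasure P' (B i)) = emeasure P' (\<Union> (range B))"
      using B P' by (intro suminf_emeasure) auto
    show "(\<Sum>i. ennreal (1 - t) * emeasure P (B i) + ennreal t * emeasure P' (B i)) =
          ennreal (1 - t) * emeasure P (\<Union> (range B)) + ennreal t * emeasure P' (\<Union> (range B))"
      by (simp add: suminf_add[symmetric] 1[symmetric] 2[symmetric])
  qed
qed

lemma sets_mix[simp]: "sets (mix_measure MX t P P') = sets MX"
  unfolding mix_measure_def by simp

lemma space_mix[simp]: "space (mix_measure MX t P P') = space MX"
  unfolding mix_measure_def by (simp add: space_measure_of_conv)

lemma nn_integral_mix:
  assumes P: "sets P = sets MX" and P': "sets P' = sets MX" and t: "0 \<le> t" "t \<le> 1"
    and f: "f \<in> borel_measurable MX"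
  shows "(\<integral>\<^sup>+x. f x \<partial>mix_measure MX t P P') = ennreal (1 - t) * (\<integral>\<^sup>+x. f x \<partial>P) + ennreal t * (\<integral>\<^sup>+x. f x \<partial>P')"
  using f
proof induction
  case (cong f g)
  have sp: "space P = space MX" "space P' = space MX"
    using P P' sets_eq_imp_space_eq by blast+
  have "integral\<^sup>N (mix_measure MX t P P') f = integral\<^sup>N (mix_measure MX t P P') g"
    "integral\<^sup>N P f = integral\<^sup>N P g" "integral\<^sup>N P' f = integral\<^sup>N P' g"
    by (intro nn_integral_cong; simp add: cong.hyps(3) sp)+
  then show ?case using cong(4) by simp
next
  case (set A)
  thus ?case
    using P P' t by (simp add: emeasure_mix)
next
  case (mult f c)
  have m: "f \<in> borel_measurable (mix_measure MX t P P')" "f \<in> borel_measurable P" "f \<in> borel_measurable P'"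
    using mult P P' by (auto cong: measurable_cong_sets)
  show ?case using mult m
    by (simp add: nn_integral_cmult distrib_left mult.left_commute)
next
  case (add f g)
  have m: "f \<in> borel_measurable (mix_measure MX t P P')" "f \<in> borel_measurable P" "f \<in> borel_measurable P'"
      "g \<in> borel_measurable (mix_measure MX t P P')" "g \<in> borel_measurable P" "g \<in> borel_measurable P'"
    using add P P' by (auto cong: measurable_cong_sets)
  show ?case using add m
    by (simp add: nn_integral_add distrib_left algebra_simps)
next
  case (seq U)
  have m: "\<And>i. U i \<in> borel_measurable (mix_measure MX t P P')" "\<And>i. U i \<in> borel_measurable P" "\<And>i. U i \<in> borel_measurable P'"
    using seq P P' by (auto cong: measurable_cong_sets)
  have i1: "incseq (\<lambda>i. ennreal (1 - t) * integral\<^sup>N P (U i))"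
    using seq(3) m by (auto simp: incseq_def le_fun_def intro!: mult_left_mono nn_integral_mono)
  have i2: "incseq (\<lambda>i. ennreal t * integral\<^sup>N P' (U i))"
    using seq(3) m by (auto simp: incseq_def le_fun_def intro!: mult_left_mono nn_integral_mono)
  show ?case
    using seq m
    by (simp add: nn_integral_monotone_convergence_SUP ennreal_SUP_add[OF i1 i2, symmetric] SUP_mult_left_ennreal image_comp)
qed


lemma enn2real_lin:
  assumes "X < \<top>" "Y < \<top>" "0 \<le> a" "0 \<le> b"
  shows "enn2real (ennreal a * X + ennreal b * Y) = a * enn2real X + b * enn2real Y"
  using assms by (simp add: enn2real_plus enn2real_mult ennreal_mult_less_top)

lemma nn_integral_ennreal_fin:
  fixes h :: "_ \<Rightarrow> real"
  assumes "integrable M h"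
  shows "(\<integral>\<^sup>+x. ennreal (h x) \<partial>M) < \<top>" "(\<integral>\<^sup>+x. ennreal (- h x) \<partial>M) < \<top>"
proof -
  have n: "(\<integral>\<^sup>+x. ennreal (norm (h x)) \<partial>M) < \<top>"
    using assms by (simp add: integrable_iff_bounded)
  have "(\<integral>\<^sup>+x. ennreal (h x) \<partial>M) \<le> (\<integral>\<^sup>+x. ennreal (norm (h x)) \<partial>M)"
    by (intro nn_integral_mono) (simp add: ennreal_leI)
  then show "(\<integral>\<^sup>+x. ennreal (h x) \<partial>M) < \<top>" using n by (meson le_less_trans)
  have "(\<integral>\<^sup>+x. ennreal (- h x) \<partial>M) \<le> (\<integral>\<^sup>+x. ennreal (norm (h x)) \<partial>M)"
    by (intro nn_integral_mono) (simp add: ennreal_leI)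
  then show "(\<integral>\<^sup>+x. ennreal (- h x) \<partial>M) < \<top>" using n by (meson le_less_trans)
qed

lemma integral_mix:
  fixes h :: "_ \<Rightarrow> real"
  assumes P: "sets P = sets MX" and P': "sets P' = sets MX" and t: "0 \<le> t" "t \<le> 1"
    and h: "h \<in> borel_measurable MX" and iP: "integrable P h" and iP': "integrable P' h"
  shows "integrable (mix_measure MX t P P') h"
    "(\<integral>x. h x \<partial>mix_measure MX t P P') = (1 - t) * (\<integral>x. h x \<partial>P) + t * (\<integral>x. h x \<partial>P')"
proof -
  have hm: "(\<lambda>x. ennreal (norm (h x))) \<in> borel_measurable MX" using h by measurable
  have "(\<integral>\<^sup>+x. ennreal (norm (h x)) \<partial>mix_measure MX t P P') < \<top>"
    unfolding nn_integral_mix[OF P P' t hm] using iP iP' t by (simp add: integrable_iff_bounded ennreal_mult_less_top)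
  moreover have "h \<in> borel_measurable (mix_measure MX t P P')"
    using h by (simp cong: measurable_cong_sets)
  ultimately show I: "integrable (mix_measure MX t P P') h"
    by (simp add: integrable_iff_bounded)
  have hm1: "(\<lambda>x. ennreal (h x)) \<in> borel_measurable MX" using h by measurable
  have hm2: "(\<lambda>x. ennreal (- h x)) \<in> borel_measurable MX" using h by measurable
  show "(\<integral>x. h x \<partial>mix_measure MX t P P') = (1 - t) * (\<integral>x. h x \<partial>P) + t * (\<integral>x. h x \<partial>P')"
    unfolding real_lebesgue_integral_def[OF I] real_lebesgue_integral_def[OF iP] real_lebesgue_integral_def[OF iP']
    unfolding nn_integral_mix[OF P P' t hm1] nn_integral_mix[OF P P' t hm2]
    using t nn_integral_ennreal_fin[OF iP] nn_integral_ennreal_fin[OF iP']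
    by (simp add: enn2real_lin algebra_simps)
qed

lemma integral_bind_real:
  fixes g :: "_ \<Rightarrow> real"
  assumes N: "N \<in> M \<rightarrow>\<^sub>M subprob_algebra B" and g: "g \<in> borel_measurable B"
    and ib: "integrable (M \<bind> N) g" and iN: "\<And>x. x \<in> space M \<Longrightarrow> integrable (N x) g"
  shows "integrable M (\<lambda>x. \<integral>y. g y \<partial>N x)" "(\<integral>y. g y \<partial>(M \<bind> N)) = (\<integral>x. (\<integral>y. g y \<partial>N x) \<partial>M)"
proof -
  define a where "a x = (\<integral>\<^sup>+y. ennreal (g y) \<partial>N x)" for x
  define b where "b x = (\<integral>\<^sup>+y. ennreal (- g y) \<partial>N x)" for x
  have gm1: "(\<lambda>y. ennreal (g y)) \<in> borel_measurable B" using g by measurable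
  have gm2: "(\<lambda>y. ennreal (- g y)) \<in> borel_measurable B" using g by measurable
  have am: "a \<in> borel_measurable M" unfolding a_def
    by (rule measurable_compose[OF N nn_integral_measurable_subprob_algebra[OF gm1]])
  have bm: "b \<in> borel_measurable M" unfolding b_def
    by (rule measurable_compose[OF N nn_integral_measurable_subprob_algebra[OF gm2]])
  have afin: "a x < \<top>" "b x < \<top>" if "x \<in> space M" for x
    using nn_integral_ennreal_fin[OF iN[OF that]] by (auto simp: a_def b_def)
  have ia: "(\<integral>\<^sup>+x. a x \<partial>M) = (\<integral>\<^sup>+y. ennreal (g y) \<partial>(M \<bind> N))"
    unfolding a_def by (rule nn_integral_bind[OF gm1 N, symmetric])
  have ib': "(\<integral>\<^sup>+x. b x \<partial>M) = (\<integral>\<^sup>+y. ennreal (- g y) \<partial>(M \<bind> N))"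
    unfolding b_def by (rule nn_integral_bind[OF gm2 N, symmetric])
  have ea: "(\<integral>\<^sup>+x. ennreal (enn2real (a x)) \<partial>M) = (\<integral>\<^sup>+x. a x \<partial>M)"
    by (intro nn_integral_cong) (simp add: afin less_top)
  have eb: "(\<integral>\<^sup>+x. ennreal (enn2real (b x)) \<partial>M) = (\<integral>\<^sup>+x. b x \<partial>M)"
    by (intro nn_integral_cong) (simp add: afin less_top)
  have fa: "(\<integral>\<^sup>+x. a x \<partial>M) < \<top>" "(\<integral>\<^sup>+x. b x \<partial>M) < \<top>"
    using nn_integral_ennreal_fin[OF ib] ia ib' by auto
  have Ia: "integrable M (\<lambda>x. enn2real (a x))"
    using am fa ea by (intro integrableI_nonneg) auto
  have Ib: "integrable M (\<lambda>x. enn2real (b x))"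
    using bm fa eb by (intro integrableI_nonneg) auto
  have eq: "(\<integral>y. g y \<partial>N x) = enn2real (a x) - enn2real (b x)" if "x \<in> space M" for x
    unfolding a_def b_def by (rule real_lebesgue_integral_def[OF iN[OF that]])
  have Id: "integrable M (\<lambda>x. enn2real (a x) - enn2real (b x))"
    using Ia Ib by auto
  show "integrable M (\<lambda>x. \<integral>y. g y \<partial>N x)"
  proof -
    have "integrable M (\<lambda>x. \<integral>y. g y \<partial>N x) \<longleftrightarrow> integrable M (\<lambda>x. enn2real (a x) - enn2real (b x))"
      by (rule Bochner_Integration.integrable_cong[OF refl]) (simp add: eq)
    then show ?thesis using Id by simp
  qed
  have "(\<integral>x. (\<integral>y. g y \<partial>N x) \<partial>M) = (\<integral>x. enn2real (a x) - enn2real (b x) \<partial>M)"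
    by (intro Bochner_Integration.integral_cong) (simp_all add: eq)
  also have "\<dots> = (\<integral>x. enn2real (a x) \<partial>M) - (\<integral>x. enn2real (b x) \<partial>M)"
    using Ia Ib by simp
  also have "(\<integral>x. enn2real (a x) \<partial>M) = enn2real (\<integral>\<^sup>+x. a x \<partial>M)"
    using am by (subst integral_eq_nn_integral) (auto simp: ea)
  also have "(\<integral>x. enn2real (b x) \<partial>M) = enn2real (\<integral>\<^sup>+x. b x \<partial>M)"
    using bm by (subst integral_eq_nn_integral) (auto simp: eb)
  finally show "(\<integral>y. g y \<partial>(M \<bind> N)) = (\<integral>x. (\<integral>y. g y \<partial>N x) \<partial>M)"
    using real_lebesgue_integral_def[OF ib] ia ib' by simp
qed


lemma joint_comp:
  fixes \<psi> :: "'y \<Rightarrow> 'x \<Rightarrow> 'a::euclidean_space"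
  assumes kernel: "K \<in> MX \<rightarrow>\<^sub>M prob_algebra MY"
    and psi_meas: "(\<lambda>(y, x). \<psi> y x) \<in> borel_measurable (MY \<Otimes>\<^sub>M MX)"
    and Q: "sets Q = sets MX"
    and int_joint: "integrable (joint MY MX K Q) (\<lambda>(y, x). \<psi> y x)"
    and int_cond: "\<And>x. x \<in> space MX \<Longrightarrow> integrable (K x) (\<lambda>y. \<psi> y x)"
  shows "integrable Q (\<lambda>x. (\<integral>y. \<psi> y x \<partial>K x) \<bullet> b)"
    "(\<integral>z. (\<lambda>(y, x). \<psi> y x) z \<partial>joint MY MX K Q) \<bullet> b = (\<integral>x. (\<integral>y. \<psi> y x \<partial>K x) \<bullet> b \<partial>Q)"
proof -
  have Kp[measurable]: "K \<in> MX \<rightarrow>\<^sub>M subprob_algebra MY"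
    using kernel by (rule measurable_prob_algebraD)
  define N where "N x = K x \<bind> (\<lambda>y. return (MY \<Otimes>\<^sub>M MX) (y, x))" for x
  have Nm: "N \<in> MX \<rightarrow>\<^sub>M subprob_algebra (MY \<Otimes>\<^sub>M MX)"
    unfolding N_def by measurable
  have J: "joint MY MX K Q = Q \<bind> N"
    unfolding joint_def N_def ..
  have Kx: "sets (K x) = sets MY" "prob_space (K x)" if "x \<in> space MX" for x
    using measurable_space[OF kernel that] by (auto simp: space_prob_algebra)
  have Nd: "N x = distr (K x) (MY \<Otimes>\<^sub>M MX) (\<lambda>y. (y, x))" if x: "x \<in> space MX" for x
  proof -
    have "space (K x) \<noteq> {}" using Kx[OF x] prob_space.not_empty by blast
    moreover have "(\<lambda>y. (y, x)) \<in> K x \<rightarrow>\<^sub>M MY \<Otimes>\<^sub>M MX"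
      using x by (simp add: Kx(1)[OF x] cong: measurable_cong_sets)
    ultimately show ?thesis unfolding N_def by (rule bind_return_distr')
  qed
  define g where "g z = (\<lambda>(y, x). \<psi> y x) z \<bullet> b" for z
  have gm: "g \<in> borel_measurable (MY \<Otimes>\<^sub>M MX)"
    unfolding g_def using psi_meas by measurable
  have meas_x: "(\<lambda>y. (y, x)) \<in> K x \<rightarrow>\<^sub>M MY \<Otimes>\<^sub>M MX" if x: "x \<in> space MX" for x
    using x by (simp add: Kx(1)[OF x] cong: measurable_cong_sets)
  have iN: "integrable (N x) g" if x: "x \<in> space MX" for x
    unfolding Nd[OF x] using int_cond[OF x]
    by (subst integrable_distr_eq[OF meas_x[OF x] gm]) (simp add: g_def)
  have eN: "(\<integral>z. g z \<partial>N x) = (\<integral>y. \<psi> y x \<partial>K x) \<bullet> b" if x: "x \<in> space MX" for x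
    unfolding Nd[OF x] using int_cond[OF x]
    by (subst integral_distr[OF meas_x[OF x] gm]) (simp add: g_def)
  have ib: "integrable (Q \<bind> N) g"
    using int_joint unfolding J g_def by simp
  have sQ: "space Q = space MX" using Q by (rule sets_eq_imp_space_eq)
  have NmQ: "N \<in> Q \<rightarrow>\<^sub>M subprob_algebra (MY \<Otimes>\<^sub>M MX)"
    using Nm Q by (simp cong: measurable_cong_sets)
  note R = integral_bind_real[OF NmQ gm ib iN[unfolded sQ[symmetric]]]
  show "integrable Q (\<lambda>x. (\<integral>y. \<psi> y x \<partial>K x) \<bullet> b)"
  proof -
    have "integrable Q (\<lambda>x. \<integral>z. g z \<partial>N x) \<longleftrightarrow> integrable Q (\<lambda>x. (\<integral>y. \<psi> y x \<partial>K x) \<bullet> b)"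
      by (rule Bochner_Integration.integrable_cong[OF refl]) (simp add: eN sQ)
    then show ?thesis using R(1) by simp
  qed
  show "(\<integral>z. (\<lambda>(y, x). \<psi> y x) z \<partial>joint MY MX K Q) \<bullet> b = (\<integral>x. (\<integral>y. \<psi> y x \<partial>K x) \<bullet> b \<partial>Q)"
  proof -
    have "(\<integral>z. (\<lambda>(y, x). \<psi> y x) z \<partial>joint MY MX K Q) \<bullet> b = (\<integral>z. g z \<partial>(Q \<bind> N))"
      using int_joint unfolding J g_def by simp
    also have "\<dots> = (\<integral>x. (\<integral>z. g z \<partial>N x) \<partial>Q)" by (rule R(2))
    also have "\<dots> = (\<integral>x. (\<integral>y. \<psi> y x \<partial>K x) \<bullet> b \<partial>Q)"
      by (rule Bochner_Integration.integral_cong[OF refl]) (simp add: eN sQ)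
    finally show ?thesis .
  qed
qed


theorem lemma3p3p3:
  fixes MY :: "'y measure" and MX :: "'x measure"
    and K :: "'x \<Rightarrow> 'y measure"
    and Acc :: "'x measure set"
    and \<Theta> :: "'a::euclidean_space set"
    and \<psi> :: "'a \<Rightarrow> 'y \<Rightarrow> 'x \<Rightarrow> 'a"
  assumes kernel: "K \<in> MX \<rightarrow>\<^sub>M prob_algebra MY"
    and Acc_nonempty: "Acc \<noteq> {}"
    and Acc_prob: "\<And>PX. PX \<in> Acc \<Longrightarrow> PX \<in> space (prob_algebra MX)"
    and Acc_mix: "\<And>PX PX' t. PX \<in> Acc \<Longrightarrow> PX' \<in> space (prob_algebra MX) \<Longrightarrow>
                    0 \<le> t \<Longrightarrow> t < 1 \<Longrightarrow> mix_measure MX t PX PX' \<in> Acc"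
    and psi_meas: "\<And>\<theta>. \<theta> \<in> \<Theta> \<Longrightarrow> (\<lambda>(y, x). \<psi> \<theta> y x) \<in> borel_measurable (MY \<Otimes>\<^sub>M MX)"
    and int_joint: "\<And>\<theta> PX. \<theta> \<in> \<Theta> \<Longrightarrow> PX \<in> Acc \<Longrightarrow>
                      integrable (joint MY MX K PX) (\<lambda>(y, x). \<psi> \<theta> y x)"
    and int_cond: "\<And>\<theta> x. \<theta> \<in> \<Theta> \<Longrightarrow> x \<in> space MX \<Longrightarrow> integrable (K x) (\<lambda>y. \<psi> \<theta> y x)"
    and ee_unique: "\<And>PX. PX \<in> Acc \<Longrightarrow>
                      \<exists>!\<theta>. \<theta> \<in> \<Theta> \<and> (\<integral>z. (case z of (y, x) \<Rightarrow> \<psi> \<theta> y x) \<partial>(joint MY MX K PX)) = 0"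
  shows "well_specified (ee_theta \<Theta> \<psi>) MY MX Acc K \<longleftrightarrow>
         (\<exists>\<theta>0\<in>\<Theta>. \<forall>x\<in>space MX. (\<integral>y. \<psi> \<theta>0 y x \<partial>(K x)) = 0)"
proof -
  have Accs: "sets Q = sets MX" "space Q = space MX" if "Q \<in> Acc" for Q
    using Acc_prob[OF that] by (auto simp: space_prob_algebra dest: sets_eq_imp_space_eq)
  define E where "E \<theta> Q = (\<integral>z. (case z of (y, x) \<Rightarrow> \<psi> \<theta> y x) \<partial>(joint MY MX K Q))" for \<theta> Q
  define m where "m \<theta> x = (\<integral>y. \<psi> \<theta> y x \<partial>(K x))" for \<theta> x
  have JC: "integrable Q (\<lambda>x. m \<theta> x \<bullet> b) \<and> E \<theta> Q \<bullet> b = (\<integral>x. m \<theta> x \<bullet> b \<partial>Q)"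
    if th: "\<theta> \<in> \<Theta>" and Q: "Q \<in> Acc" for \<theta> Q b
    using joint_comp[OF kernel psi_meas[OF th] Accs(1)[OF Q] int_joint[OF th Q] int_cond[OF th], of b]
    unfolding E_def m_def by simp
  have theta_eq: "ee_theta \<Theta> \<psi> (joint MY MX K Q) = \<theta>" if "Q \<in> Acc" "\<theta> \<in> \<Theta>" "E \<theta> Q = 0" for Q \<theta>
    unfolding ee_theta_def using the1_equality[OF ee_unique[OF that(1)]] that(2,3) unfolding E_def
    by simp
  show ?thesis
  proof
    assume WS: "well_specified (ee_theta \<Theta> \<psi>) MY MX Acc K"
    from Acc_nonempty obtain Q0 where Q0: "Q0 \<in> Acc" by blast
    define ts where "ts = ee_theta \<Theta> \<psi> (joint MY MX K Q0)"
    have tsQ: "ts \<in> \<Theta> \<and> E ts Q = 0" if Q: "Q \<in> Acc" for Q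
    proof -
      have "ee_theta \<Theta> \<psi> (joint MY MX K Q) = ts"
        using WS Q Q0 unfolding well_specified_def ts_def by blast
      then show ?thesis
        using theI'[OF ee_unique[OF Q]] unfolding ee_theta_def E_def by simp
    qed
    have ts: "ts \<in> \<Theta>" using tsQ[OF Q0] by simp
    show "\<exists>\<theta>0\<in>\<Theta>. \<forall>x\<in>space MX. (\<integral>y. \<psi> \<theta>0 y x \<partial>(K x)) = 0"
    proof (intro bexI[OF _ ts] ballI)
      fix x0 assume x0: "x0 \<in> space MX"
      define R where "R = return MX x0"
      have R: "R \<in> space (prob_algebra MX)"
        unfolding R_def using x0 by (simp add: space_prob_algebra prob_space_return)
      define Qm where "Qm = mix_measure MX (1/2) Q0 R"
      have Qm: "Qm \<in> Acc" unfolding Qm_def by (rule Acc_mix[OF Q0 R]) auto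
      have "m ts x0 \<bullet> b = 0" if b: "b \<in> Basis" for b
      proof -
        define c where "c x = m ts x \<bullet> b" for x
        have ic0: "integrable Q0 c" and e0: "(\<integral>x. c x \<partial>Q0) = 0"
          using JC[OF ts Q0, of b] tsQ[OF Q0] unfolding c_def by auto
        have cm: "c \<in> borel_measurable MX"
          using borel_measurable_integrable[OF ic0] Accs(1)[OF Q0] by (simp cong: measurable_cong_sets)
        have sR: "sets R = sets MX" unfolding R_def by simp
        have icR: "integrable R c"
          unfolding integrable_iff_bounded R_def using cm x0
          by (simp add: nn_integral_return cong: measurable_cong_sets)
        have eR: "(\<integral>x. c x \<partial>R) = c x0"
          unfolding R_def using x0 cm by (rule integral_return)
        have "0 = (\<integral>x. c x \<partial>Qm)"
          using JC[OF ts Qm, of b] tsQ[OF Qm] unfolding c_def by simp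
        also have "\<dots> = (1 - 1/2) * (\<integral>x. c x \<partial>Q0) + 1/2 * (\<integral>x. c x \<partial>R)"
          unfolding Qm_def by (rule integral_mix(2)[OF Accs(1)[OF Q0] sR _ _ cm ic0 icR]) auto
        finally show ?thesis using e0 eR unfolding c_def by simp
      qed
      then show "(\<integral>y. \<psi> ts y x0 \<partial>(K x0)) = 0"
        unfolding m_def by (metis euclidean_all_zero_iff)
    qed
  next
    assume "\<exists>\<theta>0\<in>\<Theta>. \<forall>x\<in>space MX. (\<integral>y. \<psi> \<theta>0 y x \<partial>(K x)) = 0"
    then obtain t0 where t0: "t0 \<in> \<Theta>" and z: "\<And>x. x \<in> space MX \<Longrightarrow> m t0 x = 0"
      unfolding m_def by blast
    have "ee_theta \<Theta> \<psi> (joint MY MX K Q) = t0" if Q: "Q \<in> Acc" for Q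
    proof (rule theta_eq[OF Q t0])
      have "E t0 Q \<bullet> b = 0" if "b \<in> Basis" for b
      proof -
        have "E t0 Q \<bullet> b = (\<integral>x. m t0 x \<bullet> b \<partial>Q)" using JC[OF t0 Q] by blast
        also have "\<dots> = (\<integral>x. 0 \<partial>Q)"
          by (rule Bochner_Integration.integral_cong[OF refl]) (simp add: z Accs(2)[OF Q])
        finally show ?thesis by simp
      qed
      then show "E t0 Q = 0" by (metis euclidean_all_zero_iff)
    qed
    then show "well_specified (ee_theta \<Theta> \<psi>) MY MX Acc K"
      unfolding well_specified_def by simp
  qed
qed

end
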